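(* Let $n,\Delta>0$ be integers and $\mu,\eta$ positive reals. Let $V$ be a set of size $n$ and $\mathcal{B}\subseteq\binom{V}{\Delta}$ a family of $\Delta$-sets with $|\mathcal{B}|\le\mu n^\Delta$. Then at most $(\Delta!/\eta^{\Delta-1})\mu n$ vertices of $V$ are $\eta n$-corrupted by $\mathcal{B}$.
   Context: For $\mathcal{B}\subseteq\binom{V}{\Delta}$ and a real $x>0$: every $B\in\mathcal{B}$ is called $x$-corrupted by $\mathcal{B}$; recursively, for $i=\Delta-1,\Delta-2,\dots,1$, an $i$-set $B\subseteq V$ is $x$-corrupted by $\mathcal{B}$ if it is contained in more than $x$ of the $(i+1)$-sets that are $x$-corrupted by $\mathcal{B}$. A vertex $v$ is $x$-corrupted if the $1$-set $\{v\}$ is. *)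

theory Defs
  imports Complex_Main
begin

text \<open>corr_sets V B x D j is the family of (D - j)-subsets of V that are x-corrupted by B
  (for j < D).\<close>
fun corr_sets :: "'a set \<Rightarrow> 'a set set \<Rightarrow> real \<Rightarrow> nat \<Rightarrow> nat \<Rightarrow> 'a set set" where
  "corr_sets V B x D 0 = B"
| "corr_sets V B x D (Suc j) =
     {S. S \<subseteq> V \<and> card S = D - Suc j \<and>
         x < real (card {T \<in> corr_sets V B x D j. S \<subseteq> T})}"

definition corrupted_vertex :: "'a set \<Rightarrow> 'a set set \<Rightarrow> real \<Rightarrow> nat \<Rightarrow> 'a \<Rightarrow> bool" where
  "corrupted_vertex V B x D v \<longleftrightarrow> {v} \<in> corr_sets V B x D (D - 1)"

end

theory Submission
  imports Defs
begin

lemma double_count: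
  fixes F G :: "'a set set" and x :: real and k :: nat
  assumes fF: "finite F" and fG: "finite G"
    and cF: "\<And>T. T \<in> F \<Longrightarrow> finite T \<and> card T = Suc k"
    and cG: "\<And>S. S \<in> G \<Longrightarrow> card S = k \<and> x < real (card {T \<in> F. S \<subseteq> T})"
  shows "x * real (card G) \<le> real (Suc k) * real (card F)"
proof -
  have "x * real (card G) = (\<Sum>S\<in>G. x)" by simp
  also have "\<dots> \<le> (\<Sum>S\<in>G. real (card {T \<in> F. S \<subseteq> T}))"
    by (rule sum_mono) (use cG in force)
  also have "\<dots> = (\<Sum>S\<in>G. \<Sum>T\<in>F. if S \<subseteq> T then 1 else 0)"
    by (rule sum.cong) (auto simp: sum.If_cases fF Int_def)
  also have "\<dots> = (\<Sum>T\<in>F. \<Sum>S\<in>G. if S \<subseteq> T then 1 else 0)"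
    by (rule sum.swap)
  also have "\<dots> = (\<Sum>T\<in>F. real (card {S \<in> G. S \<subseteq> T}))"
    by (rule sum.cong) (auto simp: sum.If_cases fG Int_def)
  also have "\<dots> \<le> (\<Sum>T\<in>F. real (Suc k))"
  proof (rule sum_mono)
    fix T assume T: "T \<in> F"
    have sub: "{S \<in> G. S \<subseteq> T} \<subseteq> (\<lambda>a. T - {a}) ` T"
    proof
      fix S assume S: "S \<in> {S \<in> G. S \<subseteq> T}"
      hence "S \<subseteq> T" "card S = k" using cG by auto
      moreover have "finite T" "card T = Suc k" using cF T by auto
      ultimately have "S \<noteq> T" by auto
      then obtain a where a: "a \<in> T" "a \<notin> S" using \<open>S \<subseteq> T\<close> by blast
      have "S \<subseteq> T - {a}" using a \<open>S \<subseteq> T\<close> by auto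
      moreover have "card (T - {a}) = k" using a \<open>finite T\<close> \<open>card T = Suc k\<close> by simp
      moreover have "finite (T - {a})" using \<open>finite T\<close> by simp
      ultimately have "S = T - {a}" using \<open>card S = k\<close> by (metis card_subset_eq)
      thus "S \<in> (\<lambda>a. T - {a}) ` T" using a by auto
    qed
    have "card {S \<in> G. S \<subseteq> T} \<le> card ((\<lambda>a. T - {a}) ` T)"
      by (rule card_mono) (use cF T sub in auto)
    also have "\<dots> \<le> card T" by (rule card_image_le) (use cF T in auto)
    finally show "real (card {S \<in> G. S \<subseteq> T}) \<le> real (Suc k)" using cF T by auto
  qed
  also have "\<dots> = real (Suc k) * real (card F)" by simp
  finally show ?thesis .
qed

theorem lemma11p7:
  fixes V :: "'a set" and B :: "'a set set" and n \<Delta> :: nat and \<mu> \<eta> :: real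
  assumes "finite V" and "card V = n" and "n > 0" and "\<Delta> > 0"
    and "\<mu> > 0" and "\<eta> > 0"
    and "B \<subseteq> {S. S \<subseteq> V \<and> card S = \<Delta>}"
    and "real (card B) \<le> \<mu> * real n ^ \<Delta>"
  shows "real (card {v \<in> V. corrupted_vertex V B (\<eta> * real n) \<Delta> v})
           \<le> (fact \<Delta> / \<eta> ^ (\<Delta> - 1)) * \<mu> * real n"
proof -
  define x where "x = \<eta> * real n"
  have xpos: "x > 0" using assms unfolding x_def by simp
  let ?L = "corr_sets V B x \<Delta>"
  have lev: "?L j \<subseteq> Pow V \<and> (\<forall>S\<in>?L j. card S = \<Delta> - j)" for j
    using assms(7) by (cases j) auto
  have fin: "finite (?L j)" for j
    using lev[of j] assms(1) by (meson finite_Pow_iff finite_subset)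
  have bound: "j < \<Delta> \<Longrightarrow> real (card (?L j)) \<le> fact \<Delta> / fact (\<Delta> - j) / x ^ j * real (card B)" for j
  proof (induction j)
    case 0 thus ?case by simp
  next
    case (Suc j)
    have IH: "real (card (?L j)) \<le> fact \<Delta> / fact (\<Delta> - j) / x ^ j * real (card B)"
      using Suc by simp
    have dc: "x * real (card (?L (Suc j))) \<le> real (Suc (\<Delta> - Suc j)) * real (card (?L j))"
    proof (rule double_count[OF fin fin])
      fix T assume "T \<in> ?L j"
      thus "finite T \<and> card T = Suc (\<Delta> - Suc j)"
        using lev[of j] assms(1) Suc.prems by (auto intro: finite_subset)
    next
      fix S assume "S \<in> ?L (Suc j)"
      thus "card S = \<Delta> - Suc j \<and> x < real (card {T \<in> ?L j. S \<subseteq> T})" by simp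
    qed
    have e: "Suc (\<Delta> - Suc j) = \<Delta> - j" using Suc.prems by simp
    have f: "fact (\<Delta> - j) = real (\<Delta> - j) * fact (\<Delta> - Suc j)"
      using Suc.prems by (metis e fact_Suc of_nat_fact)
    have "real (card (?L (Suc j))) \<le> real (\<Delta> - j) / x * real (card (?L j))"
      using dc xpos e by (simp add: field_simps)
    also have "\<dots> \<le> real (\<Delta> - j) / x * (fact \<Delta> / fact (\<Delta> - j) / x ^ j * real (card B))"
      by (rule mult_left_mono[OF IH]) (use xpos in simp)
    also have "\<dots> = fact \<Delta> / fact (\<Delta> - Suc j) / x ^ Suc j * real (card B)"
      using Suc.prems xpos by (simp add: f field_simps)
    finally show ?case .
  qed
  have "{v \<in> V. corrupted_vertex V B x \<Delta> v} \<subseteq> the_elem ` ?L (\<Delta> - 1)"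
    unfolding corrupted_vertex_def by (auto intro: rev_image_eqI)
  hence "card {v \<in> V. corrupted_vertex V B x \<Delta> v} \<le> card (?L (\<Delta> - 1))"
    by (meson card_image_le card_mono fin finite_imageI le_trans)
  hence "real (card {v \<in> V. corrupted_vertex V B x \<Delta> v}) \<le> fact \<Delta> / fact (\<Delta> - (\<Delta> - 1)) / x ^ (\<Delta> - 1) * real (card B)"
    using bound[of "\<Delta> - 1"] assms(4) by linarith
  also have "\<dots> = fact \<Delta> / x ^ (\<Delta> - 1) * real (card B)" using assms(4) by simp
  also have "\<dots> \<le> fact \<Delta> / x ^ (\<Delta> - 1) * (\<mu> * real n ^ \<Delta>)"
    by (rule mult_left_mono[OF assms(8)]) (use xpos in simp)
  also have "\<dots> = (fact \<Delta> / \<eta> ^ (\<Delta> - 1)) * \<mu> * real n"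
  proof -
    have "real n ^ \<Delta> = real n ^ (\<Delta> - 1) * real n" using assms(4)
      by (metis Suc_diff_1 power_Suc2)
    thus ?thesis unfolding x_def using assms by (simp add: power_mult_distrib field_simps)
  qed
  finally show ?thesis unfolding x_def .
qed

end
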